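(* Let $m\ge 2$ and $1\le\ell<m$. For the Borda rule (scoring function $\alpha_i=m-i$), the optimal truncated-ballot algorithm applied to $\ell$-truncated elections is an approximation algorithm with approximation ratio $\frac{\ell}{m+\frac{\ell}{m-1}\cdot\ell}$: for every election $E$, the returned candidate $w$ satisfies $\mathrm{sc}_\lambda(w)\ge\frac{\ell}{m+\ell^2/(m-1)}\max_{c\in C}\mathrm{sc}_\lambda(c)$.
   Context: An election consists of a set $V$ of $n$ voters and a set $C$ of $m$ candidates; each voter $v$ has a strict linear order over $C$, and $\mathrm{pos}_v(c)$ is the position of $c$ (1 = top). For scoring function $\lambda(i)=\alpha_i$, $\mathrm{sc}_\lambda(c)=\sum_{v}\lambda(\mathrm{pos}_v(c))$. The $\ell$-truncation reveals for each voter only her top $\ell$ candidates in order. Let $\mathrm{occ}(c)$ be the number of voters ranking $c$ among their top $\ell$ and $T(c)=\sum_{v:\,\mathrm{pos}_v(c)\le\ell}\alpha_{\mathrm{pos}_v(c)}$; $\mathrm{worst}(c)=T(c)+(n-\mathrm{occ}(c))\alpha_m$, $\mathrm{best}(c)=T(c)+(n-\mathrm{occ}(c))\alpha_{\ell+1}$. Optimal truncated-ballot algorithm: let $a$ maximize $\mathrm{worst}$, $b_1$ maximize $\mathrm{best}$, and $b_2$ maximize $\mathrm{best}$ over $C\setminus\{b_1\}$; return $a$ if $\mathrm{worst}(a)/\mathrm{best}(b_1)\ge\mathrm{worst}(b_1)/\mathrm{best}(b_2)$, else $b_1$. *)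

theory Defs
  imports Complex_Main
begin

text \<open>An election: finite set V of voters, finite set C of m candidates; each voter v
  has a strict linear order over C, represented by its position function
  pos v :: candidate => nat, a bijection from C onto {1..m} (1 = top).\<close>
definition election :: "'v set \<Rightarrow> 'c set \<Rightarrow> nat \<Rightarrow> ('v \<Rightarrow> 'c \<Rightarrow> nat) \<Rightarrow> bool" where
  "election V C m pos \<longleftrightarrow> finite V \<and> finite C \<and> card C = m \<and>
     (\<forall>v\<in>V. bij_betw (pos v) C {1..m})"

definition score :: "(nat \<Rightarrow> real) \<Rightarrow> 'v set \<Rightarrow> ('v \<Rightarrow> 'c \<Rightarrow> nat) \<Rightarrow> 'c \<Rightarrow> real" where
  "score alpha V pos c = (\<Sum>v\<in>V. alpha (pos v c))"

definition borda :: "nat \<Rightarrow> nat \<Rightarrow> real" where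
  "borda m i = real m - real i"

definition occ :: "nat \<Rightarrow> 'v set \<Rightarrow> ('v \<Rightarrow> 'c \<Rightarrow> nat) \<Rightarrow> 'c \<Rightarrow> nat" where
  "occ l V pos c = card {v\<in>V. pos v c \<le> l}"

definition Tsc :: "(nat \<Rightarrow> real) \<Rightarrow> nat \<Rightarrow> 'v set \<Rightarrow> ('v \<Rightarrow> 'c \<Rightarrow> nat) \<Rightarrow> 'c \<Rightarrow> real" where
  "Tsc alpha l V pos c = (\<Sum>v\<in>{v\<in>V. pos v c \<le> l}. alpha (pos v c))"

definition worst :: "(nat \<Rightarrow> real) \<Rightarrow> nat \<Rightarrow> nat \<Rightarrow> 'v set \<Rightarrow> ('v \<Rightarrow> 'c \<Rightarrow> nat) \<Rightarrow> 'c \<Rightarrow> real" where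
  "worst alpha m l V pos c =
     Tsc alpha l V pos c + real (card V - occ l V pos c) * alpha m"

definition best :: "(nat \<Rightarrow> real) \<Rightarrow> nat \<Rightarrow> 'v set \<Rightarrow> ('v \<Rightarrow> 'c \<Rightarrow> nat) \<Rightarrow> 'c \<Rightarrow> real" where
  "best alpha l V pos c =
     Tsc alpha l V pos c + real (card V - occ l V pos c) * alpha (l + 1)"

end

theory Submission
  imports Defs
begin

lemma pos_range:
  assumes "election V C m pos" "v \<in> V" "c \<in> C"
  shows "1 \<le> pos v c \<and> pos v c \<le> m"
proof -
  have "bij_betw (pos v) C {1..m}" using assms(1,2) unfolding election_def by simp
  then have "pos v c \<in> {1..m}" using assms(3) by (rule bij_betw_apply)
  then show ?thesis by simp
qed
lemma split_sum:
  assumes "finite V"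
  shows "(\<Sum>v\<in>V. f v) = (\<Sum>v\<in>{v\<in>V. P v}. f v) + (\<Sum>v\<in>{v\<in>V. \<not> P v}. (f v::real))"
proof -
  have "(\<Sum>v\<in>V. f v) = (\<Sum>v\<in>V. (if P v then f v else 0) + (if \<not> P v then f v else 0))"
    by (intro sum.cong) auto
  also have "\<dots> = (\<Sum>v\<in>V. (if P v then f v else 0)) + (\<Sum>v\<in>V. (if \<not> P v then f v else 0))"
    by (rule sum.distrib)
  finally show ?thesis using assms by (simp add: sum.inter_filter)
qed

lemma card_compl:
  assumes "finite V"
  shows "card {v\<in>V. \<not> P v} = card V - card {v\<in>V. P v}"
proof -
  have "{v\<in>V. \<not> P v} = V - {v\<in>V. P v}" by auto
  then show ?thesis using assms by (simp add: card_Diff_subset)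
qed

lemma T_le_score:
  assumes e: "election V C m pos" and c: "c \<in> C"
  shows "Tsc (borda m) l V pos c \<le> score (borda m) V pos c"
proof -
  have fin: "finite V" using e unfolding election_def by simp
  have "score (borda m) V pos c = Tsc (borda m) l V pos c
        + (\<Sum>v\<in>{v\<in>V. \<not> pos v c \<le> l}. borda m (pos v c))"
    unfolding score_def Tsc_def by (rule split_sum[OF fin])
  moreover have "(\<Sum>v\<in>{v\<in>V. \<not> pos v c \<le> l}. borda m (pos v c)) \<ge> 0"
    by (rule sum_nonneg) (use pos_range[OF e _ c] in \<open>auto simp: borda_def\<close>)
  ultimately show ?thesis by linarith
qed

lemma T_nonneg:
  assumes e: "election V C m pos" and c: "c \<in> C"
  shows "Tsc (borda m) l V pos c \<ge> 0"
  unfolding Tsc_def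
  by (rule sum_nonneg) (use pos_range[OF e _ c] in \<open>auto simp: borda_def\<close>)

lemma occ_le: assumes e: "election V C m pos" shows "occ l V pos c \<le> card V"
proof -
  have fin: "finite V" using e unfolding election_def by simp
  show ?thesis unfolding occ_def using fin by (intro card_mono) auto
qed

lemma score_le_best:
  assumes e: "election V C m pos" and c: "c \<in> C" and lm: "l < m"
  shows "score (borda m) V pos c \<le> best (borda m) l V pos c"
proof -
  have fin: "finite V" using e unfolding election_def by simp
  have "score (borda m) V pos c = Tsc (borda m) l V pos c
        + (\<Sum>v\<in>{v\<in>V. \<not> pos v c \<le> l}. borda m (pos v c))"
    unfolding score_def Tsc_def by (rule split_sum[OF fin])
  moreover have "(\<Sum>v\<in>{v\<in>V. \<not> pos v c \<le> l}. borda m (pos v c))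
     \<le> (\<Sum>v\<in>{v\<in>V. \<not> pos v c \<le> l}. borda m (l+1))"
    by (rule sum_mono) (auto simp: borda_def)
  moreover have "(\<Sum>v\<in>{v\<in>V. \<not> pos v c \<le> l}. borda m (l+1))
       = real (card V - occ l V pos c) * borda m (l+1)"
    using card_compl[OF fin] unfolding occ_def by simp
  ultimately show ?thesis unfolding best_def by linarith
qed

lemma T_le_occ:
  assumes e: "election V C m pos" and c: "c \<in> C"
  shows "Tsc (borda m) l V pos c \<le> real (m - 1) * real (occ l V pos c)"
proof -
  have "Tsc (borda m) l V pos c \<le> (\<Sum>v\<in>{v\<in>V. pos v c \<le> l}. real (m - 1))"
    unfolding Tsc_def
  proof (rule sum_mono)
    fix v assume "v \<in> {v\<in>V. pos v c \<le> l}"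
    then have "1 \<le> pos v c" "pos v c \<le> m" using pos_range[OF e _ c] by auto
    then show "borda m (pos v c) \<le> real (m - 1)" by (simp add: borda_def of_nat_diff)
  qed
  then show ?thesis unfolding occ_def by (simp add: mult.commute)
qed

lemma best_bound:
  assumes e: "election V C m pos" and c: "c \<in> C" and lm: "l < m"
  shows "best (borda m) l V pos c * (real m - 1) \<le>
     Tsc (borda m) l V pos c * real l + real (card V) * (real m - real l - 1) * (real m - 1)"
proof -
  define T where "T = Tsc (borda m) l V pos c"
  define oc where "oc = real (occ l V pos c)"
  define n where "n = real (card V)"
  have b: "best (borda m) l V pos c = T + (n - oc) * (real m - real l - 1)"
    unfolding best_def T_def oc_def n_def borda_def using occ_le[OF e, of l c] by (simp add: of_nat_diff)
  have t: "T \<le> (real m - 1) * oc" using T_le_occ[OF e c, of l] lm unfolding T_def oc_def by (simp add: of_nat_diff)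
  have "(real m - real l - 1) \<ge> 0" using lm by simp
  then have "T * (real m - real l - 1) \<le> (real m - 1) * oc * (real m - real l - 1)"
    using t by (simp add: mult_right_mono)
  then show ?thesis unfolding b T_def[symmetric] n_def[symmetric]
    by (simp add: algebra_simps)
qed

lemma card_top:
  assumes e: "election V C m pos" and v: "v \<in> V" and lm: "l < m"
  shows "card {c\<in>C. pos v c \<le> l} = l"
proof -
  have bij: "bij_betw (pos v) C {1..m}" using e v unfolding election_def by simp
  have inj: "inj_on (pos v) {c\<in>C. pos v c \<le> l}"
    using bij_betw_imp_inj_on[OF bij] by (rule inj_on_subset) auto
  have "pos v ` {c\<in>C. pos v c \<le> l} = {1..l}"
  proof
    show "pos v ` {c\<in>C. pos v c \<le> l} \<subseteq> {1..l}"
      using pos_range[OF e v] by auto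
  next
    show "{1..l} \<subseteq> pos v ` {c\<in>C. pos v c \<le> l}"
    proof
      fix i assume i: "i \<in> {1..l}"
      then have "i \<in> pos v ` C" using bij lm unfolding bij_betw_def by auto
      then obtain c where "c \<in> C" "i = pos v c" by blast
      then show "i \<in> pos v ` {c\<in>C. pos v c \<le> l}" using i by auto
    qed
  qed
  then show ?thesis using card_image[OF inj] by simp
qed

lemma sumT:
  assumes e: "election V C m pos" and lm: "l < m"
  shows "(\<Sum>c\<in>C. Tsc (borda m) l V pos c) \<ge> real (card V) * real l * (real m - real l)"
proof -
  have finV: "finite V" and finC: "finite C" using e unfolding election_def by simp_all
  have "(\<Sum>c\<in>C. Tsc (borda m) l V pos c) =
      (\<Sum>c\<in>C. \<Sum>v\<in>V. if pos v c \<le> l then borda m (pos v c) else 0)"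
    unfolding Tsc_def using finV by (simp add: sum.inter_filter)
  also have "\<dots> \<ge> (\<Sum>c\<in>C. \<Sum>v\<in>V. if pos v c \<le> l then (real m - real l) else 0)"
    by (intro sum_mono) (auto simp: borda_def)
  moreover have "(\<Sum>c\<in>C. \<Sum>v\<in>V. if pos v c \<le> l then (real m - real l) else 0)
     = (\<Sum>v\<in>V. \<Sum>c\<in>C. if pos v c \<le> l then (real m - real l) else 0)"
    by (rule sum.swap)
  moreover have "\<And>v. v \<in> V \<Longrightarrow> (\<Sum>c\<in>C. if pos v c \<le> l then (real m - real l) else 0)
      = real l * (real m - real l)"
  proof -
    fix v assume v: "v \<in> V"
    have "(\<Sum>c\<in>C. if pos v c \<le> l then (real m - real l) else 0)
       = (\<Sum>c\<in>{c\<in>C. pos v c \<le> l}. (real m - real l))"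
      using sum.inter_filter[OF finC, of "\<lambda>_. real m - real l" "\<lambda>c. pos v c \<le> l"] by simp
    also have "\<dots> = real l * (real m - real l)" using card_top[OF e v lm] by simp
    finally show "(\<Sum>c\<in>C. if pos v c \<le> l then (real m - real l) else 0)
      = real l * (real m - real l)" .
  qed
  ultimately show ?thesis by simp
qed

theorem corollary6:
  fixes V :: "'v set" and C :: "'c set" and pos :: "'v \<Rightarrow> 'c \<Rightarrow> nat"
    and m l :: nat and a b1 b2 w :: 'c
  assumes elec: "election V C m pos"
    and m2: "2 \<le> m" and l1: "1 \<le> l" and lm: "l < m"
    and a: "a \<in> C" "\<forall>c\<in>C. worst (borda m) m l V pos c \<le> worst (borda m) m l V pos a"
    and b1: "b1 \<in> C" "\<forall>c\<in>C. best (borda m) l V pos c \<le> best (borda m) l V pos b1"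
    and b2: "b2 \<in> C - {b1}"
            "\<forall>c\<in>C - {b1}. best (borda m) l V pos c \<le> best (borda m) l V pos b2"
    and w: "w = (if worst (borda m) m l V pos a / best (borda m) l V pos b1
                    \<ge> worst (borda m) m l V pos b1 / best (borda m) l V pos b2
                 then a else b1)"
  shows "score (borda m) V pos w \<ge>
           real l / (real m + real l ^ 2 / (real m - 1)) * Max (score (borda m) V pos ` C)"
proof -
  have finC: "finite C" and cardC: "card C = m" using elec unfolding election_def by simp_all
  define T where "T = Tsc (borda m) l V pos"
  define sc where "sc = score (borda m) V pos"
  define bs where "bs = best (borda m) l V pos"
  define n where "n = real (card V)"
  define R where "R = real l / (real m + real l ^ 2 / (real m - 1))"
  have wr: "\<And>c. worst (borda m) m l V pos c = T c"
    unfolding worst_def T_def borda_def by simp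
  have m1: "real m - 1 > 0" using m2 by simp
  have R_eq: "R = real l * (real m - 1) / (real m * (real m - 1) + real l ^ 2)"
    unfolding R_def using m1 by (simp add: field_simps)
  have Rpos: "R \<ge> 0" unfolding R_eq using m1 by simp
  have D: "real m * (real m - 1) + real l ^ 2 > 0" using m1 by (simp add: add_pos_nonneg)
  have R1: "R \<le> 1"
  proof -
    have "real l * (real m - 1) \<le> real m * (real m - 1)" using lm m1 by (simp add: mult_right_mono)
    also have "\<dots> \<le> real m * (real m - 1) + real l ^ 2" by simp
    finally show ?thesis unfolding R_eq using D by (simp add: divide_le_eq)
  qed
  have Ca: "\<forall>c\<in>C. T c \<le> T a" using a(2) wr by simp
  have mT: "real m * T a \<ge> n * real l * (real m - real l)"
  proof -
    have "(\<Sum>c\<in>C. T c) \<le> (\<Sum>c\<in>C. T a)" using Ca by (intro sum_mono) auto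
    then show ?thesis using sumT[OF elec lm] cardC unfolding T_def n_def by simp
  qed
  have Ta0: "T a \<ge> 0" using T_nonneg[OF elec a(1)] unfolding T_def .
  have B1: "bs b1 * (real m - 1) \<le> T a * real l + n * (real m - real l - 1) * (real m - 1)"
  proof -
    have "bs b1 * (real m - 1) \<le> T b1 * real l + n * (real m - real l - 1) * (real m - 1)"
      using best_bound[OF elec b1(1) lm] unfolding bs_def T_def n_def .
    moreover have "T b1 * real l \<le> T a * real l" using Ca b1(1) by (simp add: mult_right_mono)
    ultimately show ?thesis by linarith
  qed
  have key: "R * bs b1 \<le> T a"
  proof -
    have B: "real l * (n * (real m - real l - 1)) \<le> real m * T a"
    proof -
      have "n \<ge> 0" unfolding n_def by simp
      then have "n * real l * (real m - real l - 1) \<le> n * real l * (real m - real l)"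
        by (simp add: mult_left_mono)
      then show ?thesis using mT by (simp add: algebra_simps)
    qed
    have B': "(real m - 1) * (real l * (n * (real m - real l - 1))) \<le> (real m - 1) * (real m * T a)"
      using B m1 by (simp add: mult_left_mono)
    have "real l * (real m - 1) * bs b1 = real l * (bs b1 * (real m - 1))" by simp
    also have "\<dots> \<le> real l * (T a * real l + n * (real m - real l - 1) * (real m - 1))"
      using B1 by (simp add: mult_left_mono)
    also have "\<dots> = T a * real l ^ 2 + (real m - 1) * (real l * (n * (real m - real l - 1)))"
      by (simp add: algebra_simps power2_eq_square)
    also have "\<dots> \<le> T a * real l ^ 2 + (real m - 1) * (real m * T a)" using B' by simp
    also have "\<dots> = T a * (real m * (real m - 1) + real l ^ 2)" by (simp add: algebra_simps)
    finally have F: "real l * (real m - 1) * bs b1 \<le> T a * (real m * (real m - 1) + real l ^ 2)" .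
    have "R * bs b1 = real l * (real m - 1) * bs b1 / (real m * (real m - 1) + real l ^ 2)"
      unfolding R_eq by simp
    also have "\<dots> \<le> T a" using F D by (simp add: pos_divide_le_eq)
    finally show ?thesis .
  qed
  have sc_nonneg: "\<And>c. c \<in> C \<Longrightarrow> sc c \<ge> 0"
    using T_le_score[OF elec] T_nonneg[OF elec] unfolding sc_def by (meson order_trans)
  have sc_ge: "\<And>c. c \<in> C \<Longrightarrow> T c \<le> sc c" using T_le_score[OF elec] unfolding sc_def T_def by blast
  have sc_le: "\<And>c. c \<in> C \<Longrightarrow> sc c \<le> bs c" using score_le_best[OF elec _ lm] unfolding sc_def bs_def by blast
  have Cne: "C \<noteq> {}" using a(1) by blast
  obtain c0 where c0: "c0 \<in> C" "Max (sc ` C) = sc c0"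
  proof -
    have "Max (sc ` C) \<in> sc ` C" using finC Cne by (intro Max_in) auto
    then show ?thesis using that by auto
  qed
  have opt_b1: "sc c0 \<le> bs b1" using sc_le[OF c0(1)] b1(2) c0(1) unfolding bs_def by fastforce
  show ?thesis
  proof (cases "T a / bs b1 \<ge> T b1 / bs b2")
    case True
    then have "w = a" using w wr unfolding bs_def by simp
    then have "sc w \<ge> T a" using sc_ge a(1) by simp
    moreover have "R * sc c0 \<le> R * bs b1" using opt_b1 Rpos by (simp add: mult_left_mono)
    ultimately show ?thesis using key c0(2) unfolding R_def sc_def by simp
  next
    case False
    then have ww: "w = b1" using w wr unfolding bs_def by simp
    show ?thesis
    proof (cases "c0 = b1")
      case True
      have "R * sc b1 \<le> 1 * sc b1" using R1 sc_nonneg[OF b1(1)] by (rule mult_right_mono)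
      then show ?thesis using ww c0 True
        unfolding R_def[symmetric] sc_def[symmetric] by simp
    next
      case c0ne: False
      have opt2: "sc c0 \<le> bs b2" using sc_le[OF c0(1)] b2(2) c0(1) c0ne unfolding bs_def
        by (meson DiffI order_trans singletonD)
      show ?thesis
      proof (cases "bs b1 > 0")
        case False
        then have "sc c0 \<le> 0" using opt_b1 by simp
        then have "R * sc c0 \<le> 0" using Rpos by (simp add: mult_nonneg_nonpos)
        then show ?thesis using ww c0 sc_nonneg[OF b1(1)]
          unfolding R_def[symmetric] sc_def[symmetric] by simp
      next
        case True
        have r1: "T a / bs b1 \<ge> R" using key True by (simp add: pos_le_divide_eq mult.commute)
        then have gt: "T b1 / bs b2 > R" using False by simp
        then have b2pos: "bs b2 > 0"
        proof -
          have "bs b2 \<noteq> 0" using gt Rpos by auto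
          moreover have "bs b2 \<ge> 0" using sc_le[OF b2(1)[THEN DiffD1]] sc_nonneg[OF b2(1)[THEN DiffD1]] by linarith
          ultimately show ?thesis by simp
        qed
        have "T b1 > R * bs b2" using gt b2pos by (simp add: less_divide_eq mult.commute)
        moreover have "R * sc c0 \<le> R * bs b2" using opt2 Rpos by (simp add: mult_left_mono)
        moreover have "T b1 \<le> sc b1" using sc_ge b1(1) by simp
        ultimately show ?thesis using ww c0(2) unfolding R_def sc_def by simp
      qed
    qed
  qed
qed

end
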